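(* Let $(n_k)_{k\in\mathbb{N}}$ and $(m_k)_{k\in\mathbb{N}}$ be two sequences of positive integers with $m_k\geq n_k/2$ for every $k\in\mathbb{N}$, and let $t:=\sup_{k\in\mathbb{N}}\{n_k/m_k\}$. Let $Q\in\mathbb{R}[x]$ be a polynomial and let $\{f_k:\mathbb{Z}_{n_k}\to\mathbb{C}\}_{k\in\mathbb{N}}$ be a family of functions with $\|f_k\|_2^2\le Q(\log(n_k))$ for all $k\in\mathbb{N}$. Let $\epsilon>0$. If $\{f_k\}_{k\in\mathbb{N}}$ is $\epsilon$-concentrated, then for every $\eta>0$ the family $\{\widetilde{f_k}:\mathbb{Z}_{m_k}\to\mathbb{C}\}_{k\in\mathbb{N}}$ is $(t\epsilon+\eta)$-concentrated.
   Context: $\mathbb{Z}_n=\{0,1,\dots,n-1\}$ with addition mod $n$. For $f,g:\mathbb{Z}_n\to\mathbb{C}$, $\langle f,g\rangle=\frac1n\sum_{x\in\mathbb{Z}_n}f(x)\overline{g(x)}$ and $\|f\|_2^2=\langle f,f\rangle$. For $\alpha\in\mathbb{Z}_n$, $\chi_\alpha(x)=\exp(2\pi i\alpha x/n)$ and $\widehat f(\alpha)=\langle f,\chi_\alpha\rangle$. For $\Gamma\subseteq\mathbb{Z}_n$, $f|_\Gamma(x)=\sum_{\alpha\in\Gamma}\widehat f(\alpha)\chi_\alpha(x)$ (a function on $\mathbb{Z}_n$). For $f:\mathbb{Z}_n\to\mathbb{C}$ and $m\in\mathbb{N}$, $\widetilde f:\mathbb{Z}_m\to\mathbb{C}$ is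 $\widetilde f(x)=f(x)$ for $0\le x<\min(n,m)$ and $0$ otherwise. For $\delta>0$, a family $\{f_k:\mathbb{Z}_{n_k}\to\mathbb{C}\}_{k\in\mathbb{N}}$ is $\delta$-concentrated if there is a polynomial $P\in\mathbb{R}[x]$ such that for all $k\in\mathbb{N}$ there is $\Gamma_k\subseteq\mathbb{Z}_{n_k}$ with $|\Gamma_k|\le P(\log(n_k))$ and $\|f_k-f_k|_{\Gamma_k}\|_2^2<\delta$. *)

theory Defs
  imports "HOL-Analysis.Analysis" "HOL-Computational_Algebra.Polynomial"
begin

text \<open>A function on Z_n is modelled as a function nat => complex; only the values
  at 0, ..., n-1 are ever used.\<close>

definition zn_inner :: "nat \<Rightarrow> (nat \<Rightarrow> complex) \<Rightarrow> (nat \<Rightarrow> complex) \<Rightarrow> complex" where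
  "zn_inner n f g = (1 / of_nat n) * (\<Sum>x<n. f x * cnj (g x))"

definition zn_norm2sq :: "nat \<Rightarrow> (nat \<Rightarrow> complex) \<Rightarrow> real" where
  "zn_norm2sq n f = Re (zn_inner n f f)"

definition zn_char :: "nat \<Rightarrow> nat \<Rightarrow> nat \<Rightarrow> complex" where
  "zn_char n \<alpha> x = exp (2 * of_real pi * \<i> * of_nat \<alpha> * of_nat x / of_nat n)"

definition zn_fourier :: "nat \<Rightarrow> (nat \<Rightarrow> complex) \<Rightarrow> nat \<Rightarrow> complex" where
  "zn_fourier n f \<alpha> = zn_inner n f (zn_char n \<alpha>)"

definition zn_restrict :: "nat \<Rightarrow> (nat \<Rightarrow> complex) \<Rightarrow> nat set \<Rightarrow> nat \<Rightarrow> complex" where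
  "zn_restrict n f \<Gamma> x = (\<Sum>\<alpha>\<in>\<Gamma>. zn_fourier n f \<alpha> * zn_char n \<alpha> x)"

definition zn_extend :: "nat \<Rightarrow> nat \<Rightarrow> (nat \<Rightarrow> complex) \<Rightarrow> nat \<Rightarrow> complex" where
  "zn_extend n m f x = (if x < min n m then f x else 0)"

definition concentrated :: "real \<Rightarrow> (nat \<Rightarrow> nat) \<Rightarrow> (nat \<Rightarrow> nat \<Rightarrow> complex) \<Rightarrow> bool" where
  "concentrated \<delta> ns fs \<longleftrightarrow>
     (\<exists>P :: real poly. \<forall>k. \<exists>\<Gamma>. \<Gamma> \<subseteq> {..<ns k} \<and>
        real (card \<Gamma>) \<le> poly P (ln (real (ns k))) \<and>
        zn_norm2sq (ns k) (\<lambda>x. fs k x - zn_restrict (ns k) (fs k) \<Gamma> x) < \<delta>)"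

end

theory Submission
  imports Defs
begin


definition ee :: "real \<Rightarrow> complex" where
  "ee r = exp (2 * of_real pi * \<i> * of_real r)"

lemma zn_char_ee: "zn_char n a x = ee (real a * real x / real n)"
  unfolding zn_char_def ee_def by (simp add: mult.assoc)

lemma ee_add: "ee (a + b) = ee a * ee b"
  unfolding ee_def by (simp add: algebra_simps flip: exp_add)

lemma ee_cnj: "cnj (ee a) = ee (- a)"
  unfolding ee_def by (simp add: exp_cnj)

lemma ee_int: "r \<in> \<int> \<Longrightarrow> ee r = 1"
  unfolding ee_def using exp_integer_2pi[of "of_real r"]
  by (simp add: mult_ac)

lemma ee_norm [simp]: "norm (ee r) = 1"
  unfolding ee_def by (simp add: norm_exp_eq_Re)

lemma ee_zero [simp]: "ee 0 = 1"
  unfolding ee_def by simp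

lemma ee_eq_1: "ee r = 1 \<Longrightarrow> r \<in> \<int>"
proof -
  assume "ee r = 1"
  then obtain k :: int where "2 * pi * r = of_int (2*k) * pi"
    unfolding ee_def exp_eq_1 by auto
  then have "r = of_int k" by simp
  then show ?thesis by simp
qed

lemma ee_pow: "ee r ^ x = ee (r * real x)"
  unfolding ee_def by (simp add: mult_ac flip: exp_of_nat_mult)

lemma char_prod:
  "zn_char m b x * cnj (zn_char m c x) = ee ((real b - real c) / real m) ^ x"
proof -
  have "zn_char m b x * cnj (zn_char m c x) = ee (real b * real x / real m + - (real c * real x / real m))"
    by (simp add: zn_char_ee ee_cnj ee_add[symmetric])
  also have "real b * real x / real m + - (real c * real x / real m) = (real b - real c) / real m * real x"
    by (simp add: algebra_simps diff_divide_distrib)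
  finally show ?thesis by (simp add: ee_pow)
qed

lemma char_sym: "zn_char m b x = zn_char m x b"
  by (simp add: zn_char_def mult_ac)

lemma orth:
  assumes "b < m" "c < m"
  shows "(\<Sum>x<m. zn_char m b x * cnj (zn_char m c x)) = (if b = c then of_nat m else 0)"
proof -
  define z where "z = ee ((real b - real c) / real m)"
  have s: "(\<Sum>x<m. zn_char m b x * cnj (zn_char m c x)) = (\<Sum>x<m. z ^ x)"
    by (simp add: char_prod z_def)
  show ?thesis
  proof (cases "b = c")
    case True
    then show ?thesis unfolding s z_def by simp
  next
    case False
    have "z \<noteq> 1"
    proof
      assume "z = 1"
      then have "(real b - real c) / real m \<in> \<int>" unfolding z_def by (rule ee_eq_1)
      then obtain k :: int where k: "(real b - real c) / real m = of_int k" by (auto elim: Ints_cases)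
      have mpos: "real m > 0" using assms by simp
      then have k2: "real b - real c = of_int k * real m" using k by (simp add: field_simps)
      have "\<bar>real b - real c\<bar> < real m" using assms by auto
      then have "\<bar>of_int k\<bar> * real m < 1 * real m" using k2 by (simp add: abs_mult)
      then have "\<bar>of_int k :: real\<bar> < 1" using mpos by (simp only: mult_less_cancel_right)
      then have "k = 0" by linarith
      then show False using k2 False by simp
    qed
    moreover have "z ^ m = 1"
      unfolding z_def ee_pow using assms by (intro ee_int) simp
    ultimately show ?thesis unfolding s using False by (simp add: sum_gp_strict)
  qed
qed


lemma norm2sq_eq: "zn_norm2sq m w = (\<Sum>x<m. (cmod (w x))^2) / real m"
proof -
  have "(\<Sum>x<m. w x * cnj (w x)) = of_real (\<Sum>x<m. (cmod (w x))^2)"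
    by (simp add: complex_norm_square[symmetric] of_real_sum)
  then show ?thesis unfolding zn_norm2sq_def zn_inner_def
    by simp
qed

lemma norm2sq_cong: "(\<And>x. x < m \<Longrightarrow> f x = g x) \<Longrightarrow> zn_norm2sq m f = zn_norm2sq m g"
  unfolding norm2sq_eq by simp

lemma norm2sq_nonneg: "zn_norm2sq m w \<ge> 0"
  unfolding norm2sq_eq by (simp add: sum_nonneg)



lemma sum_chars_norm:
  assumes "T \<subseteq> {..<m}" "0 < m"
  shows "zn_norm2sq m (\<lambda>x. \<Sum>b\<in>T. c b * zn_char m b x) = (\<Sum>b\<in>T. (cmod (c b))^2)"
proof -
  have fT: "finite T" using assms finite_subset by blast
  have Tm: "\<And>b. b \<in> T \<Longrightarrow> b < m" using assms by auto
  have "(\<Sum>x<m. (\<Sum>b\<in>T. c b * zn_char m b x) * cnj (\<Sum>b\<in>T. c b * zn_char m b x))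
     = (\<Sum>x<m. \<Sum>b\<in>T. \<Sum>b'\<in>T. (c b * zn_char m b x) * cnj (c b' * zn_char m b' x))"
    by (simp only: cnj_sum sum_product)
  also have "\<dots> = (\<Sum>x<m. \<Sum>b\<in>T. \<Sum>b'\<in>T. c b * cnj (c b') * (zn_char m b x * cnj (zn_char m b' x)))"
    by (intro sum.cong refl) (simp add: mult_ac)
  also have "\<dots> = (\<Sum>b\<in>T. \<Sum>b'\<in>T. \<Sum>x<m. c b * cnj (c b') * (zn_char m b x * cnj (zn_char m b' x)))"
    by (simp only: sum.swap[of _ "{..<m}"])
  also have "\<dots> = (\<Sum>b\<in>T. \<Sum>b'\<in>T. c b * cnj (c b') * (if b = b' then of_nat m else 0))"
    by (intro sum.cong refl) (auto simp: orth Tm simp flip: sum_distrib_left)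
  also have "\<dots> = (\<Sum>b\<in>T. c b * cnj (c b) * of_nat m)"
    by (simp add: if_distrib fT cong: if_cong)
  also have "\<dots> = (\<Sum>b\<in>T. of_real ((cmod (c b))^2) * of_nat m)"
    by (simp only: complex_norm_square)
  also have "\<dots> = of_real (real m * (\<Sum>b\<in>T. (cmod (c b))^2))"
    by (simp add: sum_distrib_left mult_ac)
  finally have e: "(\<Sum>x<m. (\<Sum>b\<in>T. c b * zn_char m b x) * cnj (\<Sum>b\<in>T. c b * zn_char m b x)) = of_real (real m * (\<Sum>b\<in>T. (cmod (c b))^2))" .
  show ?thesis unfolding zn_norm2sq_def zn_inner_def e using assms by simp
qed


lemma inversion:
  assumes "0 < m" "x < m"
  shows "(\<Sum>b<m. zn_fourier m w b * zn_char m b x) = w x"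
proof -
  have "(\<Sum>b<m. zn_fourier m w b * zn_char m b x)
      = (\<Sum>b<m. \<Sum>y<m. (1 / of_nat m) * w y * (cnj (zn_char m b y) * zn_char m b x))"
    unfolding zn_fourier_def zn_inner_def
    by (simp add: sum_distrib_left sum_distrib_right mult.assoc)
  also have "\<dots> = (\<Sum>b<m. \<Sum>y<m. (1 / of_nat m) * w y * (zn_char m x b * cnj (zn_char m y b)))"
  proof (intro sum.cong refl)
    fix b y
    have "zn_char m b x = zn_char m x b" "zn_char m b y = zn_char m y b" by (rule char_sym)+
    then show "(1 / of_nat m) * w y * (cnj (zn_char m b y) * zn_char m b x) = (1 / of_nat m) * w y * (zn_char m x b * cnj (zn_char m y b))"
      by simp
  qed
  also have "\<dots> = (\<Sum>y<m. \<Sum>b<m. (1 / of_nat m) * w y * (zn_char m x b * cnj (zn_char m y b)))"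
    by (rule sum.swap)
  also have "\<dots> = (\<Sum>y<m. (1 / of_nat m) * w y * (\<Sum>b<m. zn_char m x b * cnj (zn_char m y b)))"
    by (simp add: sum_distrib_left)
  also have "\<dots> = (\<Sum>y<m. (1 / of_nat m) * w y * (if x = y then of_nat m else 0))"
    using assms by (intro sum.cong refl) (simp add: orth)
  also have "\<dots> = w x" using assms by (simp add: if_distrib cong: if_cong)
  finally show ?thesis .
qed

lemma restrict_compl:
  assumes "S \<subseteq> {..<m}" "0 < m" "x < m"
  shows "w x - zn_restrict m w S x = zn_restrict m w ({..<m} - S) x"
proof -
  have "w x = (\<Sum>b<m. zn_fourier m w b * zn_char m b x)" using inversion assms by simp
  also have "\<dots> = zn_restrict m w ({..<m} - S) x + zn_restrict m w S x"
    unfolding zn_restrict_def using assms by (simp add: sum.subset_diff[of S])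
  finally show ?thesis by simp
qed

lemma parseval:
  assumes "S \<subseteq> {..<m}" "0 < m"
  shows "zn_norm2sq m (\<lambda>x. w x - zn_restrict m w S x) = (\<Sum>b\<in>{..<m} - S. (cmod (zn_fourier m w b))^2)"
proof -
  have "zn_norm2sq m (\<lambda>x. w x - zn_restrict m w S x) = zn_norm2sq m (zn_restrict m w ({..<m} - S))"
    using assms by (intro norm2sq_cong) (simp add: restrict_compl)
  also have "\<dots> = (\<Sum>b\<in>{..<m} - S. (cmod (zn_fourier m w b))^2)"
    unfolding zn_restrict_def using assms by (intro sum_chars_norm) auto
  finally show ?thesis .
qed



definition NN :: "nat \<Rightarrow> (nat \<Rightarrow> complex) \<Rightarrow> real" where
  "NN m w = sqrt (zn_norm2sq m w)"

lemma NN_L2: "NN m w = L2_set (\<lambda>x. cmod (w x)) {..<m} / sqrt (real m)"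
  unfolding NN_def norm2sq_eq L2_set_def by (simp add: real_sqrt_divide)

lemma NN_nonneg [simp]: "NN m w \<ge> 0"
  unfolding NN_def by (simp add: norm2sq_nonneg)

lemma NN_sq: "(NN m w)^2 = zn_norm2sq m w"
  unfolding NN_def using norm2sq_nonneg by simp

lemma NN_cong: "(\<And>x. x < m \<Longrightarrow> f x = g x) \<Longrightarrow> NN m f = NN m g"
  unfolding NN_def using norm2sq_cong by metis

lemma NN_add: "NN m (\<lambda>x. v x + w x) \<le> NN m v + NN m w"
proof -
  have "L2_set (\<lambda>x. cmod (v x + w x)) {..<m} \<le> L2_set (\<lambda>x. cmod (v x) + cmod (w x)) {..<m}"
    by (intro L2_set_mono norm_triangle_ineq norm_ge_zero)
  also have "\<dots> \<le> L2_set (\<lambda>x. cmod (v x)) {..<m} + L2_set (\<lambda>x. cmod (w x)) {..<m}"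
    by (rule L2_set_triangle_ineq)
  finally show ?thesis unfolding NN_L2
    by (simp add: divide_right_mono flip: add_divide_distrib)
qed

lemma NN_scale: "NN m (\<lambda>x. c * w x) = cmod c * NN m w"
proof -
  have "L2_set (\<lambda>x. cmod (c * w x)) {..<m} = cmod c * L2_set (\<lambda>x. cmod (w x)) {..<m}"
    by (simp add: L2_set_right_distrib norm_mult)
  then show ?thesis unfolding NN_L2 by simp
qed

lemma NN_zero: "NN m (\<lambda>x. 0) = 0"
  unfolding NN_L2 by (simp add: L2_set_0')

lemma NN_sum: "finite A \<Longrightarrow> NN m (\<lambda>x. \<Sum>a\<in>A. g a x) \<le> (\<Sum>a\<in>A. NN m (g a))"
proof (induction A rule: finite_induct)
  case empty
  then show ?case by (simp add: NN_zero)
next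
  case (insert a A)
  have "NN m (\<lambda>x. \<Sum>a\<in>insert a A. g a x) = NN m (\<lambda>x. g a x + (\<Sum>a\<in>A. g a x))"
    using insert by simp
  also have "\<dots> \<le> NN m (g a) + NN m (\<lambda>x. \<Sum>a\<in>A. g a x)"
    using NN_add[of m "g a"] by simp
  also have "\<dots> \<le> NN m (g a) + (\<Sum>a\<in>A. NN m (g a))" using insert by simp
  finally show ?case using insert by simp
qed

lemma NN_restr_le:
  assumes "S \<subseteq> {..<m}" "0 < m"
  shows "NN m (\<lambda>x. w x - zn_restrict m w S x) \<le> NN m w"
proof -
  have "zn_norm2sq m (\<lambda>x. w x - zn_restrict m w S x) \<le> zn_norm2sq m (\<lambda>x. w x - zn_restrict m w {} x)"
    using assms by (simp add: parseval sum_mono2)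
  also have "zn_norm2sq m (\<lambda>x. w x - zn_restrict m w {} x) = zn_norm2sq m w"
    by (simp add: zn_restrict_def)
  finally show ?thesis unfolding NN_def by simp
qed

lemma fourier_le:
  assumes "b < n" "0 < n"
  shows "(cmod (zn_fourier n f b))^2 \<le> zn_norm2sq n f"
proof -
  have "(cmod (zn_fourier n f b))^2 \<le> (\<Sum>b\<in>{..<n} - {}. (cmod (zn_fourier n f b))^2)"
    using assms by (intro member_le_sum) auto
  also have "\<dots> = zn_norm2sq n (\<lambda>x. f x - zn_restrict n f {} x)"
    using assms by (simp add: parseval)
  also have "\<dots> = zn_norm2sq n f" by (simp add: zn_restrict_def)
  finally show ?thesis .
qed



lemma sin_lower:
  assumes "0 \<le> x" "x \<le> pi/2"
  shows "x / 2 \<le> sin x"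
proof (cases "x \<le> 1")
  case True
  have s: "(\<Sum>m<3. sin_coeff m * x ^ m) = x"
    by (simp add: eval_nat_numeral sin_coeff_def)
  have "\<bar>sin x - x\<bar> \<le> inverse (fact 3) * \<bar>x\<bar> ^ 3"
    using Maclaurin_sin_bound[of x 3] unfolding s .
  then have "\<bar>sin x - x\<bar> \<le> x ^ 3 / 6" using assms by (simp add: eval_nat_numeral field_simps)
  moreover have "x ^ 3 \<le> x"
  proof -
    have "x ^ 3 = x * (x * x)" by (simp add: power3_eq_cube)
    also have "\<dots> \<le> x * 1" using True assms by (intro mult_left_mono) (auto simp: mult_le_one)
    finally show ?thesis by simp
  qed
  ultimately show ?thesis using assms by linarith
next
  case False
  have "sin 1 \<le> sin x" using False assms pi_ge_two by (intro sin_monotone_2pi_le) auto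
  moreover have s: "(\<Sum>m<3. sin_coeff m * (1::real) ^ m) = 1"
    by (simp add: eval_nat_numeral sin_coeff_def)
  have "\<bar>sin 1 - 1\<bar> \<le> inverse (fact 3) * \<bar>1::real\<bar> ^ 3"
    using Maclaurin_sin_bound[of 1 3] unfolding s .
  then have "\<bar>sin 1 - 1\<bar> \<le> (1::real) / 6" by (simp add: eval_nat_numeral)
  moreover have "x \<le> 5/3" using assms pi_approx by simp
  ultimately show ?thesis by linarith
qed

lemma ee_Re: "Re (ee r) = cos (2 * pi * r)" and ee_Im: "Im (ee r) = sin (2 * pi * r)"
  unfolding ee_def by (simp_all add: Re_exp Im_exp)

lemma one_minus_ee_pos:
  assumes "0 \<le> p" "p \<le> 1/2"
  shows "2 * p \<le> cmod (1 - ee p)"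
proof (cases "p \<le> 1/4")
  case True
  have "2 * p \<le> pi * p" using pi_ge_two assms by (intro mult_right_mono) auto
  also have "pi * p = (2 * pi * p) / 2" by simp
  also have "\<dots> \<le> sin (2 * pi * p)" using assms True by (intro sin_lower) auto
  also have "\<dots> = \<bar>Im (1 - ee p)\<bar>"
  proof -
    have "sin (2 * pi * p) \<ge> 0" using assms by (intro sin_ge_zero) auto
    then show ?thesis by (simp add: ee_Im)
  qed
  also have "\<dots> \<le> cmod (1 - ee p)" by (rule abs_Im_le_cmod)
  finally show ?thesis .
next
  case False
  have "cos (2 * pi * p) \<le> 0"
  proof -
    have "pi * (2 * p) \<le> pi * 1" using assms pi_gt_zero by (intro mult_left_mono) auto
    then have h: "2 * pi * p \<le> pi" by (simp add: mult_ac)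
    have A: "-(pi/2) \<le> pi - 2 * pi * p" "pi - 2 * pi * p \<le> pi/2" 
    proof -
      have "pi * (1/4) \<le> pi * p" using False pi_gt_zero by (intro mult_left_mono) auto
      then show "-(pi/2) \<le> pi - 2 * pi * p" "pi - 2 * pi * p \<le> pi/2" using h pi_gt_zero by linarith+
    qed
    then have "0 \<le> cos (pi - 2 * pi * p)" by (intro cos_ge_zero)
    then show ?thesis by simp
  qed
  then have "2 * p \<le> Re (1 - ee p)" using assms by (simp add: ee_Re)
  also have "\<dots> \<le> cmod (1 - ee p)" using abs_Re_le_cmod[of "1 - ee p"] by linarith
  finally show ?thesis .
qed

lemma one_minus_ee:
  assumes "\<bar>p\<bar> \<le> 1/2"
  shows "2 * \<bar>p\<bar> \<le> cmod (1 - ee p)"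
proof (cases "p \<ge> 0")
  case True
  then show ?thesis using one_minus_ee_pos[of p] assms by simp
next
  case False
  have "2 * \<bar>p\<bar> \<le> cmod (1 - ee (- p))" using one_minus_ee_pos[of "-p"] assms False by simp
  also have "cmod (1 - ee (- p)) = cmod (cnj (1 - ee p))" by (simp add: ee_cnj)
  also have "\<dots> = cmod (1 - ee p)" by (rule complex_mod_cnj)
  finally show ?thesis .
qed

lemma geom_bound:
  assumes "z \<noteq> 1" "cmod z = 1"
  shows "cmod (\<Sum>x<K. z ^ x) \<le> 2 / cmod (1 - z)"
proof -
  have "cmod (1 - z ^ K) \<le> 2"
  proof -
    have "cmod (1 - z ^ K) \<le> cmod 1 + cmod (z ^ K)" by (rule norm_triangle_ineq4)
    also have "\<dots> = 2" using assms by (simp add: norm_power)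
    finally show ?thesis .
  qed
  moreover have "cmod (1 - z) > 0" using assms by simp
  ultimately show ?thesis using assms
    by (simp add: sum_gp_strict norm_divide divide_right_mono)
qed

lemma tel:
  assumes "1 \<le> L"
  shows "(\<Sum>i\<in>{L..<L+k}. 1 / (real i)^2) \<le> 2 / real L - 2 / real (L + k)"
proof (induction k)
  case 0
  then show ?case by simp
next
  case (Suc k)
  define t where "t = real (L + k)"
  have t1: "t \<ge> 1" using assms t_def by simp
  have e1: "2 / t - 2 / (t + 1) = 2 / (t * (t + 1))" using t1 by (subst diff_frac_eq) (auto simp: algebra_simps)
  have e2: "1 / t^2 = 2 / (2 * (t * t))" by (simp add: power2_eq_square)
  have e3: "2 / (2 * (t * t)) \<le> 2 / (t * (t + 1))"
  proof (rule divide_left_mono)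
    show "t * (t + 1) \<le> 2 * (t * t)" using t1 by (simp add: algebra_simps)
    have "0 < 2 * (t * t)" "0 < t * (t + 1)" using t1 by simp_all
    then show "0 < 2 * (t * t) * (t * (t + 1))" by (rule mult_pos_pos)
  qed simp
  have key: "1 / t^2 \<le> 2 / t - 2 / (t + 1)"
    using e1 e2 e3 by simp
  have "(\<Sum>i\<in>{L..<L+Suc k}. 1 / (real i)^2) = (\<Sum>i\<in>{L..<L+k}. 1 / (real i)^2) + 1 / t^2"
    by (simp add: t_def)
  also have "\<dots> \<le> 2 / real L - 2 / t + 1 / t^2" using Suc t_def by simp
  also have "\<dots> \<le> 2 / real L - 2 / real (L + Suc k)"
  proof -
    have "2 / real (L + Suc k) = 2 / (t + 1)" by (simp add: t_def add_ac)
    then show ?thesis using key by linarith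
  qed
  finally show ?case .
qed

lemma tel2:
  assumes "1 \<le> L"
  shows "(\<Sum>i\<in>{L..<N}. 1 / (real i)^2) \<le> 2 / real L"
proof -
  have "(\<Sum>i\<in>{L..<N}. 1 / (real i)^2) \<le> (\<Sum>i\<in>{L..<L+N}. 1 / (real i)^2)"
    by (intro sum_mono2) auto
  also have "\<dots> \<le> 2 / real L - 2 / real (L + N)" by (rule tel[OF assms])
  also have "\<dots> \<le> 2 / real L" by simp
  finally show ?thesis .
qed



lemma coef_u:
  shows "zn_fourier m (zn_extend n m (zn_char n a)) c
     = (1 / of_nat m) * (\<Sum>x<min n m. ee (real a / real n - real c / real m) ^ x)"
proof -
  have "(\<Sum>x<m. zn_extend n m (zn_char n a) x * cnj (zn_char m c x))
      = (\<Sum>x<m. if x \<in> {..<min n m} then zn_char n a x * cnj (zn_char m c x) else 0)"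
    by (intro sum.cong refl) (simp add: zn_extend_def)
  also have "\<dots> = (\<Sum>x\<in>{..<m} \<inter> {..<min n m}. zn_char n a x * cnj (zn_char m c x))"
    by (simp add: sum.inter_restrict)
  also have "{..<m} \<inter> {..<min n m} = {..<min n m}" by auto
  also have "(\<Sum>x<min n m. zn_char n a x * cnj (zn_char m c x))
      = (\<Sum>x<min n m. ee (real a / real n - real c / real m) ^ x)"
  proof (intro sum.cong refl)
    fix x
    have "zn_char n a x * cnj (zn_char m c x) = ee (real a * real x / real n + - (real c * real x / real m))"
      by (simp add: zn_char_ee ee_cnj ee_add[symmetric])
    also have "real a * real x / real n + - (real c * real x / real m) = (real a / real n - real c / real m) * real x"
      by (simp add: algebra_simps)
    finally show "zn_char n a x * cnj (zn_char m c x) = ee (real a / real n - real c / real m) ^ x"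
      by (simp add: ee_pow)
  qed
  finally show ?thesis unfolding zn_fourier_def zn_inner_def by simp
qed

lemma point:
  assumes "a < n" "0 < m" "1 \<le> L" "L < j" "j < m - L"
  defines "b \<equiv> nat \<lfloor>real a * real m / real n\<rfloor>"
  shows "(cmod (zn_fourier m (zn_extend n m (zn_char n a)) ((b + j) mod m)))^2
           \<le> 1 / (real j - 1)^2 + 1 / (real m - real j)^2"
proof -
  define s where "s = real a * real m / real n"
  have npos: "real n > 0" using assms by simp
  have mpos: "real m > 0" using assms by simp
  have s0: "0 \<le> s" unfolding s_def by simp
  have "real a < real n" using assms by simp
  then have "real a * real m < real n * real m" using mpos by simp
  then have sm: "s < real m" unfolding s_def using npos by (simp add: field_simps)
  have bs: "real b \<le> s" "s < real b + 1" unfolding b_def s_def[symmetric] using s0 by linarith+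
  define \<beta> where "\<beta> = (b + j) mod m"
  define q where "q = (b + j) div m"
  have bq: "real b + real j = real q * real m + real \<beta>"
  proof -
    have "b + j = q * m + \<beta>" unfolding q_def \<beta>_def by simp
    then show ?thesis by (metis of_nat_add of_nat_mult)
  qed
  define \<psi> where "\<psi> = (s - real b - real j) / real m"
  define \<phi> where "\<phi> = real a / real n - real \<beta> / real m"
  have "\<phi> = \<psi> + real q"
  proof -
    have "real a / real n = s / real m" unfolding s_def using mpos by simp
    then show ?thesis unfolding \<phi>_def \<psi>_def using bq mpos by (simp add: field_simps)
  qed
  then have ephi: "ee \<phi> = ee \<psi>" by (simp add: ee_add ee_int)
  have j2: "2 \<le> real j" "real j + 2 \<le> real m" using assms by linarith+
  define d where "d = min (real j - 1) (real m - real j)"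
  have d1: "d \<ge> 1" unfolding d_def using assms by auto
  have D: "2 * d / real m \<le> cmod (1 - ee \<psi>)"
  proof (cases "\<psi> \<ge> -1/2")
    case True
    have "\<psi> \<le> 0" unfolding \<psi>_def using bs j2 mpos by (simp add: divide_nonpos_pos)
    then have "\<bar>\<psi>\<bar> \<le> 1/2" using True by simp
    then have "2 * \<bar>\<psi>\<bar> \<le> cmod (1 - ee \<psi>)" by (rule one_minus_ee)
    moreover have "2 * d / real m \<le> 2 * \<bar>\<psi>\<bar>"
    proof -
      have "\<bar>\<psi>\<bar> = - \<psi>" using \<open>\<psi> \<le> 0\<close> by simp
      also have "- \<psi> = (real b + real j - s) / real m" unfolding \<psi>_def using mpos
        by (simp add: field_simps)
      finally have "\<bar>\<psi>\<bar> = (real b + real j - s) / real m" .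
      moreover have "d \<le> real b + real j - s" unfolding d_def using bs by linarith
      ultimately show ?thesis using mpos by (simp add: divide_right_mono)
    qed
    ultimately show ?thesis by linarith
  next
    case False
    have e1: "ee (\<psi> + 1) = ee \<psi>" by (simp add: ee_add ee_int)
    have "\<psi> + 1 = (real m + s - real b - real j) / real m" unfolding \<psi>_def using mpos
      by (simp add: field_simps)
    moreover have "0 \<le> real m + s - real b - real j" using bs j2 by linarith
    ultimately have p0: "0 \<le> \<psi> + 1" using mpos by simp
    have "\<bar>\<psi> + 1\<bar> \<le> 1/2" using False p0 by simp
    then have "2 * \<bar>\<psi> + 1\<bar> \<le> cmod (1 - ee \<psi>)" using one_minus_ee[of "\<psi> + 1"] e1 by simp
    moreover have "2 * d / real m \<le> 2 * \<bar>\<psi> + 1\<bar>"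
    proof -
      have "d \<le> real m + s - real b - real j" unfolding d_def using bs by linarith
      then have "2 * d / real m \<le> 2 * ((real m + s - real b - real j) / real m)"
        using mpos by (simp add: divide_right_mono)
      then have "2 * d / real m \<le> 2 * (\<psi> + 1)" using \<open>\<psi> + 1 = _\<close> by simp
      then show ?thesis using p0 by simp
    qed
    ultimately show ?thesis by linarith
  qed
  have Dpos: "0 < 2 * d / real m" using d1 mpos by simp
  then have ne: "ee \<psi> \<noteq> 1" using D by auto
  have "cmod (zn_fourier m (zn_extend n m (zn_char n a)) \<beta>)
      = (1 / real m) * cmod (\<Sum>x<min n m. ee \<psi> ^ x)"
    unfolding coef_u \<phi>_def[symmetric] ephi by (simp add: norm_mult norm_divide)
  also have "\<dots> \<le> (1 / real m) * (2 / cmod (1 - ee \<psi>))"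
    using geom_bound[OF ne] mpos by (intro mult_left_mono) auto
  also have "\<dots> \<le> (1 / real m) * (2 / (2 * d / real m))"
  proof -
    have Cpos: "0 < cmod (1 - ee \<psi>)" using D Dpos by linarith
    have "0 < cmod (1 - ee \<psi>) * (2 * d) / real m" using Cpos d1 mpos by simp
    then show ?thesis using D Dpos mpos by (intro mult_left_mono divide_left_mono) auto
  qed
  also have "\<dots> = 1 / d" using mpos d1 by (simp add: field_simps)
  finally have c1: "cmod (zn_fourier m (zn_extend n m (zn_char n a)) \<beta>) \<le> 1 / d" .
  then have "(cmod (zn_fourier m (zn_extend n m (zn_char n a)) \<beta>))^2 \<le> (1 / d)^2"
    by (intro power_mono) auto
  also have "(1 / d)^2 \<le> 1 / (real j - 1)^2 + 1 / (real m - real j)^2"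
  proof -
    have "(1 / d)^2 = 1 / d^2" by (simp add: power_divide)
    moreover have "0 \<le> 1 / (real j - 1)^2" "0 \<le> 1 / (real m - real j)^2" by simp_all
    moreover have "d = real j - 1 \<or> d = real m - real j" unfolding d_def by linarith
    ultimately show ?thesis by auto
  qed
  finally show ?thesis unfolding \<beta>_def .
qed



definition Wset :: "nat \<Rightarrow> nat \<Rightarrow> nat \<Rightarrow> nat \<Rightarrow> nat set" where
  "Wset n m a L = (\<lambda>j. (nat \<lfloor>real a * real m / real n\<rfloor> + j) mod m) ` ({..L} \<union> {m-L..<m})"

lemma Wset_sub: "0 < m \<Longrightarrow> Wset n m a L \<subseteq> {..<m}"
  unfolding Wset_def by auto

lemma Wset_card: "card (Wset n m a L) \<le> 2 * L + 1"
proof -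
  have "card (Wset n m a L) \<le> card ({..L} \<union> {m-L..<m})"
    unfolding Wset_def by (rule card_image_le) simp
  also have "\<dots> \<le> card {..L} + card {m-L..<m}" by (rule card_Un_le)
  also have "\<dots> \<le> 2 * L + 1" by simp
  finally show ?thesis .
qed

lemma reidx:
  fixes F :: "nat \<Rightarrow> real"
  assumes "inj_on h J" "h ` J \<subseteq> A" "finite A" "\<And>i. 0 \<le> F i"
  shows "(\<Sum>j\<in>J. F (h j)) \<le> (\<Sum>i\<in>A. F i)"
proof -
  have "(\<Sum>j\<in>J. F (h j)) = (\<Sum>i\<in>h ` J. F i)" using assms(1) by (simp add: sum.reindex)
  also have "\<dots> \<le> (\<Sum>i\<in>A. F i)" using assms by (intro sum_mono2) auto
  finally show ?thesis .
qed

lemma tail: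
  assumes "a < n" "0 < m" "1 \<le> L"
  shows "(\<Sum>c\<in>{..<m} - Wset n m a L. (cmod (zn_fourier m (zn_extend n m (zn_char n a)) c))^2) \<le> 4 / real L"
proof -
  define b where "b = nat \<lfloor>real a * real m / real n\<rfloor>"
  define g where "g = (\<lambda>j. (b + j) mod m)"
  define J where "J = {L<..<m-L}"
  define F where "F = (\<lambda>c. (cmod (zn_fourier m (zn_extend n m (zn_char n a)) c))^2)"
  have W: "Wset n m a L = g ` ({..L} \<union> {m-L..<m})" unfolding Wset_def g_def b_def by simp
  have bm: "b < m"
  proof -
    have "real a < real n" using assms by simp
    then have "real a * real m < real n * real m" using assms by simp
    then have "real a * real m / real n < real m" using assms by (simp add: field_simps)
    then have f: "\<lfloor>real a * real m / real n\<rfloor> < int m" by (simp add: floor_less_iff)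
    show ?thesis unfolding b_def using f assms(2)
      by (cases "\<lfloor>real a * real m / real n\<rfloor> \<ge> 0") (auto simp: nat_less_iff)
  qed
  have sub: "{..<m} - Wset n m a L \<subseteq> g ` J"
  proof
    fix c assume c: "c \<in> {..<m} - Wset n m a L"
    define j where "j = (c + m - b) mod m"
    have gj: "g j = c"
    proof -
      have "g j = (b + (c + m - b)) mod m" unfolding g_def j_def by (simp add: mod_add_right_eq)
      also have "b + (c + m - b) = c + m" using bm by simp
      finally show ?thesis using c by simp
    qed
    have jm: "j < m" unfolding j_def using assms by simp
    have "j \<notin> {..L} \<union> {m-L..<m}"
    proof
      assume "j \<in> {..L} \<union> {m-L..<m}"
      then have "c \<in> Wset n m a L" unfolding W gj[symmetric] by blast
      then show False using c by blast
    qed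
    then have "j \<in> J" unfolding J_def using jm by auto
    then show "c \<in> g ` J" using gj by blast
  qed
  have Fnn: "\<And>c. 0 \<le> F c" unfolding F_def by simp
  have "(\<Sum>c\<in>{..<m} - Wset n m a L. F c) \<le> (\<Sum>c\<in>g ` J. F c)"
    using sub Fnn unfolding J_def by (intro sum_mono2) auto
  also have "\<dots> \<le> (\<Sum>j\<in>J. F (g j))"
    using sum_image_le[of J F g] Fnn unfolding J_def by (simp add: o_def)
  also have "\<dots> \<le> (\<Sum>j\<in>J. 1 / (real j - 1)^2 + 1 / (real m - real j)^2)"
  proof (intro sum_mono)
    fix j assume "j \<in> J"
    then have "L < j" "j < m - L" unfolding J_def by auto
    then show "F (g j) \<le> 1 / (real j - 1)^2 + 1 / (real m - real j)^2"
      unfolding F_def g_def b_def using point[OF assms] by blast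
  qed
  also have "\<dots> = (\<Sum>j\<in>J. 1 / (real (j - 1))^2 + 1 / (real (m - j))^2)"
  proof (rule sum.cong[OF refl])
    fix j assume "j \<in> J"
    then have "1 \<le> j" "j \<le> m" unfolding J_def by auto
    then show "1 / (real j - 1)^2 + 1 / (real m - real j)^2 = 1 / (real (j - 1))^2 + 1 / (real (m - j))^2"
      by (simp add: of_nat_diff)
  qed
  also have "\<dots> = (\<Sum>j\<in>J. 1 / (real (j - 1))^2) + (\<Sum>j\<in>J. 1 / (real (m - j))^2)"
    by (rule sum.distrib)
  also have "(\<Sum>j\<in>J. 1 / (real (j - 1))^2) \<le> (\<Sum>i\<in>{L..<m}. 1 / (real i)^2)"
  proof -
    have i1: "inj_on (\<lambda>j. j - 1) J" by (rule inj_onI) (auto simp: J_def)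
    have i2: "(\<lambda>j. j - 1) ` J \<subseteq> {L..<m}" by (auto simp: J_def)
    show ?thesis using reidx[OF i1 i2, of "\<lambda>i. 1 / (real i)^2"] by simp
  qed
  also have "(\<Sum>j\<in>J. 1 / (real (m - j))^2) \<le> (\<Sum>i\<in>{L..<m}. 1 / (real i)^2)"
  proof -
    have i1: "inj_on (\<lambda>j. m - j) J" by (rule inj_onI) (auto simp: J_def)
    have i2: "(\<lambda>j. m - j) ` J \<subseteq> {L..<m}" by (auto simp: J_def)
    show ?thesis using reidx[OF i1 i2, of "\<lambda>i. 1 / (real i)^2"] by simp
  qed
  also have "(\<Sum>i\<in>{L..<m}. 1 / (real i)^2) \<le> 2 / real L" by (rule tel2[OF assms(3)])
  finally show ?thesis unfolding F_def by simp
qed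



lemma fourier_lin:
  assumes "finite A"
  shows "zn_fourier m (\<lambda>x. v x + (\<Sum>a\<in>A. c a * w a x)) b
       = zn_fourier m v b + (\<Sum>a\<in>A. c a * zn_fourier m (w a) b)"
proof -
  have "(\<Sum>x<m. (\<Sum>a\<in>A. c a * w a x) * cnj (zn_char m b x))
      = (\<Sum>x<m. \<Sum>a\<in>A. c a * (w a x * cnj (zn_char m b x)))"
    by (simp add: sum_distrib_right mult.assoc)
  also have "\<dots> = (\<Sum>a\<in>A. \<Sum>x<m. c a * (w a x * cnj (zn_char m b x)))"
    by (rule sum.swap)
  also have "\<dots> = (\<Sum>a\<in>A. c a * (\<Sum>x<m. w a x * cnj (zn_char m b x)))"
    by (simp add: sum_distrib_left)
  finally have e: "(\<Sum>x<m. (\<Sum>a\<in>A. c a * w a x) * cnj (zn_char m b x))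
      = (\<Sum>a\<in>A. c a * (\<Sum>x<m. w a x * cnj (zn_char m b x)))" .
  have "zn_fourier m (\<lambda>x. v x + (\<Sum>a\<in>A. c a * w a x)) b
      = (1 / of_nat m) * ((\<Sum>x<m. v x * cnj (zn_char m b x)) + (\<Sum>x<m. (\<Sum>a\<in>A. c a * w a x) * cnj (zn_char m b x)))"
    unfolding zn_fourier_def zn_inner_def by (simp add: distrib_right sum.distrib)
  also have "\<dots> = zn_fourier m v b + (\<Sum>a\<in>A. c a * zn_fourier m (w a) b)"
    unfolding e zn_fourier_def zn_inner_def by (simp add: distrib_left sum_distrib_left mult_ac)
  finally show ?thesis .
qed

lemma restrict_lin:
  assumes "finite A" "finite S"
  shows "zn_restrict m (\<lambda>x. v x + (\<Sum>a\<in>A. c a * w a x)) S y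
       = zn_restrict m v S y + (\<Sum>a\<in>A. c a * zn_restrict m (w a) S y)"
proof -
  have "zn_restrict m (\<lambda>x. v x + (\<Sum>a\<in>A. c a * w a x)) S y
      = (\<Sum>b\<in>S. zn_fourier m v b * zn_char m b y + (\<Sum>a\<in>A. c a * (zn_fourier m (w a) b * zn_char m b y)))"
    unfolding zn_restrict_def fourier_lin[OF assms(1)]
    by (simp add: distrib_right sum_distrib_right mult.assoc)
  also have "\<dots> = zn_restrict m v S y + (\<Sum>b\<in>S. \<Sum>a\<in>A. c a * (zn_fourier m (w a) b * zn_char m b y))"
    unfolding zn_restrict_def by (simp add: sum.distrib)
  also have "(\<Sum>b\<in>S. \<Sum>a\<in>A. c a * (zn_fourier m (w a) b * zn_char m b y))
      = (\<Sum>a\<in>A. \<Sum>b\<in>S. c a * (zn_fourier m (w a) b * zn_char m b y))"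
    by (rule sum.swap)
  also have "\<dots> = (\<Sum>a\<in>A. c a * zn_restrict m (w a) S y)"
    unfolding zn_restrict_def by (simp add: sum_distrib_left)
  finally show ?thesis .
qed

lemma poly_dom:
  fixes P :: "real poly" and c :: real
  assumes "0 \<le> c"
  shows "\<exists>R :: real poly. \<forall>x y. 0 \<le> x \<longrightarrow> 0 \<le> y \<longrightarrow> y \<le> x + c \<longrightarrow> poly P y \<le> poly R x"
proof -
  define R where "R = (\<Sum>i\<le>degree P. [:\<bar>coeff P i\<bar>:] * [:c, 1:] ^ i)"
  have pR: "poly R x = (\<Sum>i\<le>degree P. \<bar>coeff P i\<bar> * (c + x) ^ i)" for x
    unfolding R_def by (simp add: poly_sum)
  show ?thesis
  proof (intro exI allI impI)
    fix x y :: real assume xy: "0 \<le> x" "0 \<le> y" "y \<le> x + c"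
    have "poly P y = (\<Sum>i\<le>degree P. coeff P i * y ^ i)" by (rule poly_altdef)
    also have "\<dots> \<le> (\<Sum>i\<le>degree P. \<bar>coeff P i\<bar> * (c + x) ^ i)"
    proof (rule sum_mono)
      fix i
      have "coeff P i * y ^ i \<le> \<bar>coeff P i\<bar> * y ^ i" using xy by (intro mult_right_mono) auto
      also have "\<dots> \<le> \<bar>coeff P i\<bar> * (c + x) ^ i" using xy by (intro mult_left_mono power_mono) auto
      finally show "coeff P i * y ^ i \<le> \<bar>coeff P i\<bar> * (c + x) ^ i" .
    qed
    also have "\<dots> = poly R x" by (rule pR[symmetric])
    finally show "poly P y \<le> poly R x" .
  qed
qed



lemma extend_norm:
  assumes "0 < n" "0 < m"
  shows "zn_norm2sq m (zn_extend n m h) \<le> real n / real m * zn_norm2sq n h"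
proof -
  have "(\<Sum>x<m. (cmod (zn_extend n m h x))^2) = (\<Sum>x<m. if x \<in> {..<min n m} then (cmod (h x))^2 else 0)"
    by (intro sum.cong refl) (simp add: zn_extend_def)
  also have "\<dots> = (\<Sum>x\<in>{..<m} \<inter> {..<min n m}. (cmod (h x))^2)"
    by (simp add: sum.inter_restrict)
  also have "\<dots> \<le> (\<Sum>x<n. (cmod (h x))^2)" by (intro sum_mono2) auto
  finally have s: "(\<Sum>x<m. (cmod (zn_extend n m h x))^2) \<le> (\<Sum>x<n. (cmod (h x))^2)" .
  have "zn_norm2sq m (zn_extend n m h) \<le> (\<Sum>x<n. (cmod (h x))^2) / real m"
    unfolding norm2sq_eq using s assms by (simp add: divide_right_mono)
  also have "\<dots> = real n / real m * zn_norm2sq n h"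
    unfolding norm2sq_eq using assms by simp
  finally show ?thesis .
qed

lemma per_k:
  fixes n m L :: nat and f :: "nat \<Rightarrow> complex" and G :: "nat set"
  assumes n: "0 < n" and m: "0 < m" and G: "G \<subseteq> {..<n}"
    and cardG: "real (card G) \<le> p"
    and fq: "zn_norm2sq n f \<le> qv"
    and hsmall: "zn_norm2sq n (\<lambda>x. f x - zn_restrict n f G x) < \<epsilon>"
    and tt: "real n / real m \<le> t" "t \<le> 2"
    and eps: "0 < \<epsilon>" and dl: "0 < \<delta>" "\<delta> \<le> 1" "\<delta> * (2 * sqrt (2 * \<epsilon>) + 1) \<le> \<eta>"
    and L: "L = nat \<lceil>4 * p^2 * qv / \<delta>^2\<rceil> + 1"
  shows "zn_norm2sq m (\<lambda>x. zn_extend n m f x - zn_restrict m (zn_extend n m f) (\<Union>\<alpha>\<in>G. Wset n m \<alpha> L) x)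
           < t * \<epsilon> + \<eta>"
proof -
  define G' where "G' = (\<Union>\<alpha>\<in>G. Wset n m \<alpha> L)"
  have fG: "finite G" using G finite_subset by blast
  have G'm: "G' \<subseteq> {..<m}" unfolding G'_def using Wset_sub[OF m] by blast
  have fG': "finite G'" using G'm finite_subset by blast
  define h where "h = (\<lambda>x. f x - zn_restrict n f G x)"
  define ht where "ht = zn_extend n m h"
  define u where "u = (\<lambda>\<alpha>. zn_extend n m (zn_char n \<alpha>))"
  define c where "c = (\<lambda>\<alpha>. zn_fourier n f \<alpha>)"
  have Fdec: "zn_extend n m f = (\<lambda>x. ht x + (\<Sum>\<alpha>\<in>G. c \<alpha> * u \<alpha> x))"
  proof
    fix x show "zn_extend n m f x = ht x + (\<Sum>\<alpha>\<in>G. c \<alpha> * u \<alpha> x)"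
      unfolding ht_def u_def c_def h_def zn_extend_def zn_restrict_def by (cases "x < min n m") auto
  qed
  define Ru where "Ru = (\<lambda>\<alpha> x. u \<alpha> x - zn_restrict m (u \<alpha>) G' x)"
  define Rh where "Rh = (\<lambda>x. ht x - zn_restrict m ht G' x)"
  have Rdec: "zn_extend n m f x - zn_restrict m (zn_extend n m f) G' x
      = Rh x + (\<Sum>\<alpha>\<in>G. c \<alpha> * Ru \<alpha> x)" for x
  proof -
    have R: "zn_restrict m (zn_extend n m f) G' x = zn_restrict m ht G' x + (\<Sum>\<alpha>\<in>G. c \<alpha> * zn_restrict m (u \<alpha>) G' x)"
      unfolding Fdec by (rule restrict_lin[OF fG fG'])
    have F: "zn_extend n m f x = ht x + (\<Sum>\<alpha>\<in>G. c \<alpha> * u \<alpha> x)" by (simp add: Fdec)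
    have "zn_extend n m f x - zn_restrict m (zn_extend n m f) G' x
       = (ht x + (\<Sum>\<alpha>\<in>G. c \<alpha> * u \<alpha> x)) - (zn_restrict m ht G' x + (\<Sum>\<alpha>\<in>G. c \<alpha> * zn_restrict m (u \<alpha>) G' x))"
      by (simp only: F R)
    then show ?thesis unfolding Rh_def Ru_def
      by (simp add: right_diff_distrib sum_subtractf)
  qed
  define N where "N = NN m (\<lambda>x. zn_extend n m f x - zn_restrict m (zn_extend n m f) G' x)"
  define a where "a = NN m ht"
  define b where "b = (\<Sum>\<alpha>\<in>G. cmod (c \<alpha>) * NN m (Ru \<alpha>))"
  have "N = NN m (\<lambda>x. Rh x + (\<Sum>\<alpha>\<in>G. c \<alpha> * Ru \<alpha> x))"
    unfolding N_def by (intro NN_cong) (simp add: Rdec)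
  also have "\<dots> \<le> NN m Rh + NN m (\<lambda>x. \<Sum>\<alpha>\<in>G. c \<alpha> * Ru \<alpha> x)" by (rule NN_add)
  also have "NN m (\<lambda>x. \<Sum>\<alpha>\<in>G. c \<alpha> * Ru \<alpha> x) \<le> (\<Sum>\<alpha>\<in>G. NN m (\<lambda>x. c \<alpha> * Ru \<alpha> x))"
    by (rule NN_sum[OF fG])
  also have "(\<Sum>\<alpha>\<in>G. NN m (\<lambda>x. c \<alpha> * Ru \<alpha> x)) = b"
    unfolding b_def by (simp add: NN_scale)
  also have "NN m Rh \<le> a" unfolding Rh_def a_def by (rule NN_restr_le[OF G'm m])
  finally have Nab: "N \<le> a + b" by simp
  have a0: "0 \<le> a" unfolding a_def by simp
  have "a^2 \<le> real n / real m * zn_norm2sq n h"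
    unfolding a_def NN_sq ht_def using extend_norm[OF n m] .
  also have "\<dots> < real n / real m * \<epsilon>" using hsmall n m unfolding h_def
    by (intro mult_strict_left_mono) auto
  also have "\<dots> \<le> t * \<epsilon>" using tt eps by (intro mult_right_mono) auto
  finally have a2: "a^2 < t * \<epsilon>" .
  have "t * \<epsilon> \<le> 2 * \<epsilon>" using tt eps by (intro mult_right_mono) auto
  then have "a^2 \<le> 2 * \<epsilon>" using a2 by linarith
  then have asq: "a \<le> sqrt (2 * \<epsilon>)" using a0 by (simp add: real_le_rsqrt)
  have qv0: "0 \<le> qv" using fq norm2sq_nonneg[of n f] by linarith
  have p0: "0 \<le> p" using cardG of_nat_0_le_iff[of "card G"] by linarith
  have L1: "1 \<le> L" using L by simp
  have LX: "4 * p^2 * qv / \<delta>^2 \<le> real L" using L by linarith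
  define e where "e = sqrt qv * sqrt (4 / real L)"
  have e0: "0 \<le> e" unfolding e_def using qv0 by simp
  have trm: "cmod (c \<alpha>) * NN m (Ru \<alpha>) \<le> e" if "\<alpha> \<in> G" for \<alpha>
  proof -
    have an: "\<alpha> < n" using that G by auto
    have "(cmod (c \<alpha>))^2 \<le> qv" unfolding c_def using fourier_le[OF an n, of f] fq by linarith
    then have c1: "cmod (c \<alpha>) \<le> sqrt qv" by (simp add: real_le_rsqrt)
    have "(NN m (Ru \<alpha>))^2 = (\<Sum>b\<in>{..<m} - G'. (cmod (zn_fourier m (u \<alpha>) b))^2)"
      unfolding NN_sq Ru_def by (rule parseval[OF G'm m])
    also have "\<dots> \<le> (\<Sum>b\<in>{..<m} - Wset n m \<alpha> L. (cmod (zn_fourier m (u \<alpha>) b))^2)"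
      using that unfolding G'_def by (intro sum_mono2) auto
    also have "\<dots> \<le> 4 / real L" unfolding u_def by (rule tail[OF an m L1])
    finally have "NN m (Ru \<alpha>) \<le> sqrt (4 / real L)" by (simp add: real_le_rsqrt)
    then show ?thesis unfolding e_def using c1 qv0 by (intro mult_mono) auto
  qed
  have "b \<le> (\<Sum>\<alpha>\<in>G. e)" unfolding b_def using trm by (intro sum_mono) auto
  also have "\<dots> = real (card G) * e" by simp
  finally have be: "b \<le> real (card G) * e" .
  have b0: "0 \<le> b" unfolding b_def by (intro sum_nonneg) simp
  have "(real (card G) * e)^2 = (real (card G))^2 * (qv * (4 / real L))"
  proof -
    have e2: "e^2 = qv * (4 / real L)" unfolding e_def using qv0 by (simp add: power_mult_distrib)
    show ?thesis by (simp add: power_mult_distrib e2)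
  qed
  also have "\<dots> \<le> p^2 * (qv * (4 / real L))"
    using cardG qv0 L1 by (intro mult_right_mono power_mono) auto
  also have "\<dots> = (4 * p^2 * qv) / real L" by simp
  also have "\<dots> \<le> \<delta>^2"
  proof -
    have d2: "0 < \<delta>^2" using dl by simp
    have "4 * p^2 * qv \<le> real L * \<delta>^2" using LX pos_divide_le_eq[OF d2] by blast
    moreover have "0 < real L" using L1 by simp
    ultimately show ?thesis using pos_divide_le_eq[of "real L" "4 * p^2 * qv" "\<delta>^2"] by (simp add: mult.commute)
  qed
  finally have X: "(real (card G) * e)^2 \<le> \<delta>^2" .
  have d0: "0 \<le> \<delta>" using dl by simp
  have "real (card G) * e \<le> \<delta>" using power2_le_imp_le[OF X d0] .
  then have bd: "b \<le> \<delta>" using be by linarith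
  have N0: "0 \<le> N" unfolding N_def by simp
  have "N^2 \<le> (a + b)^2" using Nab N0 by (intro power_mono) auto
  also have "\<dots> = a^2 + b * (2 * a + b)" by (simp add: power2_eq_square algebra_simps)
  also have "b * (2 * a + b) \<le> \<delta> * (2 * sqrt (2 * \<epsilon>) + 1)"
    using bd b0 a0 asq dl by (intro mult_mono) auto
  finally have "N^2 < t * \<epsilon> + \<eta>" using a2 dl by linarith
  then show ?thesis unfolding N_def NN_sq G'_def .
qed



theorem theorem1p6:
  fixes ns ms :: "nat \<Rightarrow> nat" and Q :: "real poly" and fs :: "nat \<Rightarrow> nat \<Rightarrow> complex"
    and \<epsilon> :: real
  assumes "\<And>k. ns k > 0" and "\<And>k. ms k > 0"
    and "\<And>k. real (ms k) \<ge> real (ns k) / 2"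
    and "\<And>k. zn_norm2sq (ns k) (fs k) \<le> poly Q (ln (real (ns k)))"
    and "\<epsilon> > 0"
    and "concentrated \<epsilon> ns fs"
  shows "\<forall>\<eta>>0. concentrated ((SUP k. real (ns k) / real (ms k)) * \<epsilon> + \<eta>) ms
            (\<lambda>k. zn_extend (ns k) (ms k) (fs k))"
proof (intro allI impI)
  fix \<eta> :: real assume eta: "\<eta> > 0"
  note npos = assms(1) and mpos = assms(2) and nm = assms(3) and fQ = assms(4) and eps = assms(5)
  obtain P :: "real poly" where hP: "\<forall>k. \<exists>\<Gamma>. \<Gamma> \<subseteq> {..<ns k} \<and>
        real (card \<Gamma>) \<le> poly P (ln (real (ns k))) \<and>
        zn_norm2sq (ns k) (\<lambda>x. fs k x - zn_restrict (ns k) (fs k) \<Gamma> x) < \<epsilon>"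
    using assms(6) unfolding concentrated_def by blast
  from choice[OF hP] obtain G where G: "\<And>k. G k \<subseteq> {..<ns k} \<and>
        real (card (G k)) \<le> poly P (ln (real (ns k))) \<and>
        zn_norm2sq (ns k) (\<lambda>x. fs k x - zn_restrict (ns k) (fs k) (G k) x) < \<epsilon>" by blast
  define t where "t = (SUP k. real (ns k) / real (ms k))"
  have le2: "real (ns k) / real (ms k) \<le> 2" for k
  proof -
    have "real (ns k) \<le> 2 * real (ms k)" using nm[of k] by simp
    then show ?thesis using mpos[of k] by (simp add: divide_le_eq)
  qed
  have bdd: "bdd_above (range (\<lambda>k. real (ns k) / real (ms k)))"
    using le2 by (intro bdd_aboveI) auto
  have tk: "real (ns k) / real (ms k) \<le> t" for k
    unfolding t_def by (rule cSUP_upper[OF UNIV_I bdd])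
  have t2: "t \<le> 2" unfolding t_def by (rule cSUP_least) (auto simp: le2)
  define \<delta> where "\<delta> = min 1 (\<eta> / (2 * sqrt (2 * \<epsilon>) + 1))"
  have pos: "0 < 2 * sqrt (2 * \<epsilon>) + 1" 
  proof -
    have "0 \<le> sqrt (2 * \<epsilon>)" using eps by simp
    then show ?thesis by linarith
  qed
  have dpos: "0 < \<delta>" unfolding \<delta>_def using eta pos by simp
  have d1: "\<delta> \<le> 1" unfolding \<delta>_def by simp
  have deta: "\<delta> * (2 * sqrt (2 * \<epsilon>) + 1) \<le> \<eta>"
  proof -
    have "\<delta> \<le> \<eta> / (2 * sqrt (2 * \<epsilon>) + 1)" unfolding \<delta>_def by simp
    then show ?thesis using pos by (simp add: le_divide_eq)
  qed
  define p where "p = (\<lambda>k. poly P (ln (real (ns k))))"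
  define q where "q = (\<lambda>k. poly Q (ln (real (ns k))))"
  define L where "L = (\<lambda>k. nat \<lceil>4 * (p k)^2 * q k / \<delta>^2\<rceil> + 1)"
  define G' where "G' = (\<lambda>k. \<Union>\<alpha>\<in>G k. Wset (ns k) (ms k) \<alpha> (L k))"
  define R0 where "R0 = P * (smult (8 / \<delta>^2) (P * P * Q) + [:5:])"
  obtain R :: "real poly" where R: "\<And>x y. 0 \<le> x \<Longrightarrow> 0 \<le> y \<Longrightarrow> y \<le> x + ln 2 \<Longrightarrow> poly R0 y \<le> poly R x"
    using poly_dom[of "ln 2" R0] by auto
  show "concentrated (t * \<epsilon> + \<eta>) ms (\<lambda>k. zn_extend (ns k) (ms k) (fs k))"
    unfolding t_def[symmetric] concentrated_def
  proof (intro exI allI conjI)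
    fix k
    show "G' k \<subseteq> {..<ms k}" unfolding G'_def using Wset_sub[OF mpos[of k]] by blast
    show "zn_norm2sq (ms k) (\<lambda>x. zn_extend (ns k) (ms k) (fs k) x - zn_restrict (ms k) (zn_extend (ns k) (ms k) (fs k)) (G' k) x)
        < t * \<epsilon> + \<eta>"
    proof -
      have g1: "G k \<subseteq> {..<ns k}" "real (card (G k)) \<le> p k"
          "zn_norm2sq (ns k) (\<lambda>x. fs k x - zn_restrict (ns k) (fs k) (G k) x) < \<epsilon>"
        using G[of k] unfolding p_def by blast+
      have "L k = nat \<lceil>4 * (p k)^2 * poly Q (ln (real (ns k))) / \<delta>^2\<rceil> + 1"
        unfolding L_def q_def ..
      then show ?thesis unfolding G'_def
        by (rule per_k[OF npos mpos g1(1) g1(2) fQ g1(3) tk t2 eps dpos d1 deta])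
    qed
    have fG: "finite (G k)" using G[of k] finite_subset by blast
    have p0: "0 \<le> p k" using G[of k] of_nat_0_le_iff[of "card (G k)"] unfolding p_def by linarith
    have q0: "0 \<le> q k" using fQ[of k] norm2sq_nonneg[of "ns k" "fs k"] unfolding q_def by linarith
    define X where "X = 4 * (p k)^2 * q k / \<delta>^2"
    have X0: "0 \<le> X" unfolding X_def using q0 by simp
    have LX: "real (L k) \<le> X + 2"
    proof -
      have "real (nat \<lceil>X\<rceil>) \<le> X + 1" using X0 by linarith
      then show ?thesis unfolding L_def X_def by simp
    qed
    have "card (G' k) \<le> (\<Sum>\<alpha>\<in>G k. card (Wset (ns k) (ms k) \<alpha> (L k)))"
      unfolding G'_def by (rule card_UN_le[OF fG])
    also have "\<dots> \<le> (\<Sum>\<alpha>\<in>G k. 2 * L k + 1)" by (intro sum_mono Wset_card)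
    also have "\<dots> = card (G k) * (2 * L k + 1)" by simp
    finally have "real (card (G' k)) \<le> real (card (G k) * (2 * L k + 1))"
      by (simp only: of_nat_le_iff)
    also have "\<dots> = real (card (G k)) * (2 * real (L k) + 1)" by (simp add: algebra_simps)
    also have "\<dots> \<le> p k * (2 * (X + 2) + 1)"
      using G[of k] LX p0 unfolding p_def by (intro mult_mono) auto
    also have "\<dots> = poly R0 (ln (real (ns k)))"
    proof -
      have "2 * (X + 2) + 1 = 8 / \<delta>^2 * (p k * p k * q k) + 5"
        unfolding X_def by (simp add: power2_eq_square)
      moreover have "poly R0 (ln (real (ns k))) = p k * (8 / \<delta>^2 * (p k * p k * q k) + 5)"
        unfolding R0_def p_def q_def by simp
      ultimately show ?thesis by simp
    qed
    also have "\<dots> \<le> poly R (ln (real (ms k)))"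
    proof (rule R)
      show "0 \<le> ln (real (ms k))" using mpos[of k] by simp
      show "0 \<le> ln (real (ns k))" using npos[of k] by simp
      have "real (ns k) \<le> 2 * real (ms k)" using nm[of k] by simp
      then have "ln (real (ns k)) \<le> ln (2 * real (ms k))" using npos[of k] by simp
      also have "\<dots> = ln (real (ms k)) + ln 2" using mpos[of k] by (simp add: ln_mult)
      finally show "ln (real (ns k)) \<le> ln (real (ms k)) + ln 2" .
    qed
    finally show "real (card (G' k)) \<le> poly R (ln (real (ms k)))" .
  qed
qed


end
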